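(* For a matrix $A\in SL_2\mathcal{V}$, the following are equivalent: (1) $A\neq1$ and $(A-1)^2=0$; (2) $A$ is conjugate (in $SL_2\mathcal{V}$) to $P_0=\begin{pmatrix}1&1\\0&1\end{pmatrix}$; (3) $A=\begin{pmatrix}1-ac^*&aa^*\\-cc^*&1+ca^*\end{pmatrix}$ for some $(a,c)\in S\mathbb{H}$.
   Context: For $q=a+bi+cj+dk\in\mathbb{H}$, $q^*=a+bi+cj-dk$, $\bar q=a-bi-cj-dk$. $\mathcal{V}=\mathrm{span}_\mathbb{R}\{1,i,j\}$. $S\mathbb{H}=\{(\xi,\eta)\in\mathbb{H}^2\setminus\{(0,0)\}:\xi\bar\eta\in\mathcal{V}\}$. $SL_2\mathcal{V}$ is the group of quaternionic matrices $\begin{pmatrix}a&b\\c&d\end{pmatrix}$ with $ab^*,cd^*,c^*a,d^*b,ba^*,dc^*,a^*c,b^*d\in\mathcal{V}$ and $ad^*-bc^*=da^*-cb^*=d^*a-b^*c=a^*d-c^*b=1$. *)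

theory Defs
  imports Main "HOL.Real"
begin

datatype quat = Quat (qre: real) (qi: real) (qj: real) (qk: real)

instantiation quat :: ring_1
begin
definition "0 = Quat 0 0 0 0"
definition "1 = Quat 1 0 0 0"
definition "p + q = Quat (qre p + qre q) (qi p + qi q) (qj p + qj q) (qk p + qk q)"
definition "p - q = Quat (qre p - qre q) (qi p - qi q) (qj p - qj q) (qk p - qk q)"
definition "- q = Quat (- qre q) (- qi q) (- qj q) (- qk q)"
definition "p * q = Quat
   (qre p * qre q - qi p * qi q - qj p * qj q - qk p * qk q)
   (qre p * qi q + qi p * qre q + qj p * qk q - qk p * qj q)
   (qre p * qj q - qi p * qk q + qj p * qre q + qk p * qi q)
   (qre p * qk q + qi p * qj q - qj p * qi q + qk p * qre q)"
instance
  by standard (auto simp: zero_quat_def one_quat_def plus_quat_def minus_quat_def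
      uminus_quat_def times_quat_def algebra_simps intro: quat.expand)
end

definition qstar :: "quat \<Rightarrow> quat" where
  "qstar q = Quat (qre q) (qi q) (qj q) (- qk q)"

definition qcnj :: "quat \<Rightarrow> quat" where
  "qcnj q = Quat (qre q) (- qi q) (- qj q) (- qk q)"

definition V :: "quat set" where
  "V = {q. qk q = 0}"

definition SH :: "(quat \<times> quat) set" where
  "SH = {(\<xi>, \<eta>). (\<xi>, \<eta>) \<noteq> (0, 0) \<and> \<xi> * qcnj \<eta> \<in> V}"

text \<open>M2 a b c d is the matrix ((a, b), (c, d)).\<close>
datatype mat2 = M2 quat quat quat quat

fun mmul :: "mat2 \<Rightarrow> mat2 \<Rightarrow> mat2" where
  "mmul (M2 a b c d) (M2 a' b' c' d') =
     M2 (a * a' + b * c') (a * b' + b * d') (c * a' + d * c') (c * b' + d * d')"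

fun msub :: "mat2 \<Rightarrow> mat2 \<Rightarrow> mat2" where
  "msub (M2 a b c d) (M2 a' b' c' d') = M2 (a - a') (b - b') (c - c') (d - d')"

definition mone :: mat2 where "mone = M2 1 0 0 1"
definition mzero :: mat2 where "mzero = M2 0 0 0 0"

definition P0 :: mat2 where "P0 = M2 1 1 0 1"

fun in_SL2V :: "mat2 \<Rightarrow> bool" where
  "in_SL2V (M2 a b c d) \<longleftrightarrow>
     a * qstar b \<in> V \<and> c * qstar d \<in> V \<and> qstar c * a \<in> V \<and> qstar d * b \<in> V \<and>
     b * qstar a \<in> V \<and> d * qstar c \<in> V \<and> qstar a * c \<in> V \<and> qstar b * d \<in> V \<and>
     a * qstar d - b * qstar c = 1 \<and> d * qstar a - c * qstar b = 1 \<and>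
     qstar d * a - qstar b * c = 1 \<and> qstar a * d - qstar c * b = 1"

definition SL2V :: "mat2 set" where
  "SL2V = {A. in_SL2V A}"

end

theory Submission
  imports Defs Complex_Main
begin


lemma quat_eq_iff: "x = y \<longleftrightarrow> qre x = qre y \<and> qi x = qi y \<and> qj x = qj y \<and> qk x = qk y"
  by (cases x; cases y) auto

lemma qcomps [simp]:
  "qre 0 = 0" "qi 0 = 0" "qj 0 = 0" "qk 0 = 0"
  "qre 1 = 1" "qi 1 = 0" "qj 1 = 0" "qk 1 = 0"
  "qre (p + q) = qre p + qre q" "qi (p + q) = qi p + qi q" "qj (p + q) = qj p + qj q" "qk (p + q) = qk p + qk q"
  "qre (p - q) = qre p - qre q" "qi (p - q) = qi p - qi q" "qj (p - q) = qj p - qj q" "qk (p - q) = qk p - qk q"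
  "qre (- q) = - qre q" "qi (- q) = - qi q" "qj (- q) = - qj q" "qk (- q) = - qk q"
  "qre (p * q) = qre p * qre q - qi p * qi q - qj p * qj q - qk p * qk q"
  "qi (p * q) = qre p * qi q + qi p * qre q + qj p * qk q - qk p * qj q"
  "qj (p * q) = qre p * qj q - qi p * qk q + qj p * qre q + qk p * qi q"
  "qk (p * q) = qre p * qk q + qi p * qj q - qj p * qi q + qk p * qre q"
  "qre (qstar q) = qre q" "qi (qstar q) = qi q" "qj (qstar q) = qj q" "qk (qstar q) = - qk q"
  "qre (qcnj q) = qre q" "qi (qcnj q) = - qi q" "qj (qcnj q) = - qj q" "qk (qcnj q) = - qk q"
  by (simp_all add: zero_quat_def one_quat_def plus_quat_def minus_quat_def uminus_quat_def
      times_quat_def qstar_def qcnj_def)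

definition qnorm2 :: "quat \<Rightarrow> real" where
  "qnorm2 q = qre q ^ 2 + qi q ^ 2 + qj q ^ 2 + qk q ^ 2"

lemma qnorm2_pos: "q \<noteq> 0 \<Longrightarrow> qnorm2 q > 0"
proof -
  assume "q \<noteq> 0"
  hence "qre q \<noteq> 0 \<or> qi q \<noteq> 0 \<or> qj q \<noteq> 0 \<or> qk q \<noteq> 0" by (auto simp: quat_eq_iff)
  thus ?thesis unfolding qnorm2_def
    by (smt (verit) not_sum_power2_lt_zero power2_less_eq_zero_iff zero_le_power2)
qed

lemma inv_aux:
  fixes x y z w n :: real
  assumes h: "x*x+y*y+z*z+w*w = n" and n: "n \<noteq> 0"
  shows "(x/n)*x - (-y/n)*y - (-z/n)*z - (-w/n)*w = 1"
    "x*(x/n) - y*(-y/n) - z*(-z/n) - w*(-w/n) = 1"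
    "(x/n)*y + (-y/n)*x + (-z/n)*w - (-w/n)*z = 0"
    "(x/n)*z - (-y/n)*w + (-z/n)*x + (-w/n)*y = 0"
    "(x/n)*w + (-y/n)*z - (-z/n)*y + (-w/n)*x = 0"
    "x*(-y/n) + y*(x/n) + z*(-w/n) - w*(-z/n) = 0"
    "x*(-z/n) - y*(-w/n) + z*(x/n) + w*(-y/n) = 0"
    "x*(-w/n) + y*(-z/n) - z*(-y/n) + w*(x/n) = 0"
  using n h by (simp_all add: divide_simps; simp add: algebra_simps; linarith)+

instantiation quat :: division_ring
begin
definition "inverse q = Quat (qre q / qnorm2 q) (- qi q / qnorm2 q) (- qj q / qnorm2 q) (- qk q / qnorm2 q)"
definition "divide p q = p * inverse (q::quat)"
lemma quat_inv_l: "a \<noteq> 0 \<Longrightarrow> inverse a * a = (1::quat)"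
  and quat_inv_r: "a \<noteq> 0 \<Longrightarrow> a * inverse a = (1::quat)"
proof -
  assume "a \<noteq> 0"
  hence n: "qnorm2 a \<noteq> 0" using qnorm2_pos by force
  have e: "qre a * qre a + qi a * qi a + qj a * qj a + qk a * qk a = qnorm2 a"
    by (simp add: qnorm2_def power2_eq_square)
  note I = inv_aux[OF e n]
  show "inverse a * a = 1"
    by (simp only: quat_eq_iff qcomps inverse_quat_def quat.sel I simp_thms)
  show "a * inverse a = 1"
    by (simp only: quat_eq_iff qcomps inverse_quat_def quat.sel I simp_thms)
qed
instance
  by standard (simp_all add: quat_inv_l quat_inv_r divide_quat_def, simp add: inverse_quat_def quat_eq_iff)
end

lemma qstar_mult: "qstar (x * y) = qstar y * qstar x"
  by (simp add: quat_eq_iff algebra_simps)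
lemma qstar_qstar [simp]: "qstar (qstar x) = x"
  by (simp add: quat_eq_iff)
lemma qstar_add: "qstar (x + y) = qstar x + qstar y" by (simp add: quat_eq_iff)
lemma qstar_diff: "qstar (x - y) = qstar x - qstar y" by (simp add: quat_eq_iff)
lemma qstar_minus: "qstar (- x) = - qstar x" by (simp add: quat_eq_iff)
lemma qstar_one [simp]: "qstar 1 = 1" by (simp add: quat_eq_iff)
lemma qstar_zero [simp]: "qstar 0 = 0" by (simp add: quat_eq_iff)
lemma qstar_eq0 [simp]: "qstar x = 0 \<longleftrightarrow> x = 0" by (simp add: quat_eq_iff)
lemma qstar_inverse: "qstar (inverse x) = inverse (qstar x)"
  by (simp add: quat_eq_iff inverse_quat_def qnorm2_def)
lemma V_iff: "x \<in> V \<longleftrightarrow> qstar x = x" by (auto simp: V_def quat_eq_iff)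
lemma SH_iff: "(a, c) \<in> SH \<longleftrightarrow> (a \<noteq> 0 \<or> c \<noteq> 0) \<and> qstar c * a \<in> V"
  by (auto simp: SH_def V_def algebra_simps)

lemma qsqrt_exists:
  assumes "q \<in> V"
  shows "\<exists>a. a * qstar a = q"
proof -
  obtain q0 q1 q2 q3 where qq: "q = Quat q0 q1 q2 q3" by (cases q)
  have q3: "q3 = 0" using assms qq by (simp add: V_def)
  define S where "S = sqrt (q0^2 + q1^2 + q2^2)"
  have S0: "S \<ge> 0" unfolding S_def by simp
  have S2: "S^2 = q0^2 + q1^2 + q2^2" unfolding S_def by simp
  define X where "X = (q0 + S) / 2"
  show ?thesis
  proof (cases "X > 0")
    case True
    define x where "x = sqrt X"
    have x0: "x > 0" unfolding x_def using True by simp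
    have x2: "x * x = X" unfolding x_def using True by simp
    let ?a = "Quat x (q1/(2*x)) (q2/(2*x)) 0"
    have e1: "x * x - q1 / (2 * x) * (q1 / (2 * x)) - q2 / (2 * x) * (q2 / (2 * x)) = q0"
    proof -
      have "4 * X * X - q1*q1 - q2*q2 = 4 * q0 * X"
      proof -
        have hX: "2 * X = q0 + S" unfolding X_def by simp
        show ?thesis using hX S2 by algebra
      qed
      hence "4 * (x*x) * (x*x) - q1*q1 - q2*q2 = 4 * q0 * (x*x)" using x2 by simp
      thus ?thesis using x0 by (simp add: field_simps)
    qed
    have "?a * qstar ?a = q"
      using x0 e1 by (simp add: quat_eq_iff qq q3 field_simps)
    thus ?thesis by blast
  next
    case False
    have "S \<le> - q0" using False unfolding X_def by simp
    hence "S^2 \<le> q0^2" using S0 power_mono[of S "- q0" 2] by simp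
    hence q12: "q1 = 0" "q2 = 0" using S2 by (simp_all, smt (verit) zero_le_power2 zero_eq_power2, smt (verit) zero_le_power2 zero_eq_power2)
    have "q0 \<le> 0" using \<open>S \<le> - q0\<close> S0 by simp
    let ?a = "Quat 0 (sqrt (- q0)) 0 0"
    have "?a * qstar ?a = q"
      using \<open>q0 \<le> 0\<close> by (simp add: quat_eq_iff qq q3 q12 flip: power2_eq_square)
    thus ?thesis by blast
  qed
qed


lemma mmul_assoc: "mmul (mmul X Y) Z = mmul X (mmul Y Z)"
  by (cases X; cases Y; cases Z) (simp add: algebra_simps)
lemma mmul_msub_right: "mmul X (msub Y Z) = msub (mmul X Y) (mmul X Z)"
  by (cases X; cases Y; cases Z) (simp add: algebra_simps)
lemma mmul_msub_left: "mmul (msub Y Z) X = msub (mmul Y X) (mmul Z X)"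
  by (cases X; cases Y; cases Z) (simp add: algebra_simps)
lemma mmul_mone_left [simp]: "mmul mone X = X"
  by (cases X) (simp add: mone_def)
lemma mmul_mone_right [simp]: "mmul X mone = X"
  by (cases X) (simp add: mone_def)
lemma mmul_mzero_left [simp]: "mmul mzero X = mzero"
  by (cases X) (simp add: mzero_def)
lemma mmul_mzero_right [simp]: "mmul X mzero = mzero"
  by (cases X) (simp add: mzero_def)
lemma msub_self [simp]: "msub X X = mzero"
  by (cases X) (simp add: mzero_def)

fun minv :: "mat2 \<Rightarrow> mat2" where
  "minv (M2 a b c d) = M2 (qstar d) (- qstar b) (- qstar c) (qstar a)"

lemma V_neg [simp]: "- x \<in> V \<longleftrightarrow> x \<in> V" by (auto simp: V_def)
lemma Vswap1: "x * qstar y \<in> V \<Longrightarrow> y * qstar x = x * qstar y"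
  by (metis V_iff qstar_mult qstar_qstar)
lemma Vswap2: "qstar x * y \<in> V \<Longrightarrow> qstar y * x = qstar x * y"
  by (metis V_iff qstar_mult qstar_qstar)

lemma SL2V_inv:
  assumes "B \<in> SL2V"
  shows "minv B \<in> SL2V" "mmul B (minv B) = mone" "mmul (minv B) B = mone"
proof -
  obtain a b c d where B: "B = M2 a b c d" by (cases B)
  have h: "in_SL2V (M2 a b c d)" using assms B by (simp add: SL2V_def)
  show "minv B \<in> SL2V" using h B by (simp add: SL2V_def qstar_minus)
  show "mmul B (minv B) = mone" using h B Vswap1[of a b] Vswap1[of c d]
    by (simp add: mone_def)
  show "mmul (minv B) B = mone" using h B Vswap2[of d b] Vswap2[of c a]
    by (simp add: mone_def)
qed

lemma two_one:
  assumes "B \<in> SL2V" "C \<in> SL2V" "mmul B C = mone" "mmul C B = mone"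
    "A = mmul (mmul B P0) C"
  shows "A \<noteq> mone \<and> mmul (msub A mone) (msub A mone) = mzero"
proof
  show "A \<noteq> mone"
  proof
    assume "A = mone"
    hence "mmul (mmul C A) B = mone" using assms by simp
    also have "mmul (mmul C A) B = mmul (mmul C B) (mmul P0 (mmul C B))"
      using assms(5) by (simp add: mmul_assoc)
    also have "\<dots> = P0" using assms by simp
    finally show False by (simp add: P0_def mone_def)
  qed
  define N where "N = M2 0 1 0 0"
  have "msub P0 mone = N" by (simp add: N_def P0_def mone_def)
  have AN: "msub A mone = mmul (mmul B N) C"
  proof -
    have "msub A mone = msub (mmul (mmul B P0) C) (mmul (mmul B mone) C)" using assms by simp
    also have "\<dots> = mmul (mmul B (msub P0 mone)) C" by (simp add: mmul_msub_left mmul_msub_right)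
    finally show ?thesis using \<open>msub P0 mone = N\<close> by simp
  qed
  have NN: "mmul N N = mzero" by (simp add: N_def mzero_def)
  have "mmul (msub A mone) (msub A mone) = mmul (mmul B (mmul N (mmul (mmul C B) N))) C"
    unfolding AN by (simp add: mmul_assoc)
  also have "\<dots> = mzero" using assms NN by simp
  finally show "mmul (msub A mone) (msub A mone) = mzero" .
qed

lemma SL2V_constr:
  fixes a0 a1 a2 a3 c0 c1 c2 c3 n :: real
  assumes hn: "n = a0*a0+a1*a1+a2*a2+a3*a3+c0*c0+c1*c1+c2*c2+c3*c3" and n0: "n \<noteq> 0"
    and h: "a0*c3 + a1*c2 = a2*c1 + a3*c0"
  shows "in_SL2V (M2 (Quat a0 a1 a2 a3) (Quat (-c0/n) (c1/n) (c2/n) (-c3/n))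
                     (Quat c0 c1 c2 c3) (Quat (a0/n) (-a1/n) (-a2/n) (a3/n)))"
proof -
  have h2: "(a0*a0+a1*a1+a2*a2+a3*a3+c0*c0+c1*c1+c2*c2+c3*c3) * (n*(n*n)) = n*(n*(n*n))"
    by (simp only: hn[symmetric])
  show ?thesis using n0 h h2 by (simp add: V_def quat_eq_iff field_simps, simp only: mult.assoc[symmetric] distrib_right[symmetric] h)
qed

lemma conj_P0:
  assumes "in_SL2V (M2 a b c d)"
  shows "mmul (mmul (M2 a b c d) P0) (minv (M2 a b c d))
       = M2 (1 - a * qstar c) (a * qstar a) (- (c * qstar c)) (1 + c * qstar a)"
proof -
  have e1: "a * qstar d = 1 + b * qstar c" and e2: "d * qstar a = 1 + c * qstar b"
    using assms by (simp_all add: algebra_simps)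
  have e3: "b * qstar a = a * qstar b" using assms Vswap1[of a b] by simp
  have e4: "d * qstar c = c * qstar d" using assms Vswap1[of c d] by simp
  show ?thesis by (simp add: P0_def algebra_simps e1 e2 e3 e4)
qed

lemma three_two:
  assumes "(a, c) \<in> SH"
  shows "\<exists>B C. B \<in> SL2V \<and> C \<in> SL2V \<and> mmul B C = mone \<and> mmul C B = mone \<and>
           M2 (1 - a * qstar c) (a * qstar a) (- (c * qstar c)) (1 + c * qstar a) = mmul (mmul B P0) C"
proof -
  obtain a0 a1 a2 a3 where a: "a = Quat a0 a1 a2 a3" by (cases a)
  obtain c0 c1 c2 c3 where c: "c = Quat c0 c1 c2 c3" by (cases c)
  define n where "n = a0*a0+a1*a1+a2*a2+a3*a3+c0*c0+c1*c1+c2*c2+c3*c3"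
  have nz: "a \<noteq> 0 \<or> c \<noteq> 0" and hV: "qstar c * a \<in> V" using assms SH_iff by auto
  have h: "a0*c3 + a1*c2 = a2*c1 + a3*c0" using hV a c by (simp add: V_def algebra_simps)
  have n0: "n \<noteq> 0"
  proof
    assume "n = 0"
    hence "a0 = 0 \<and> a1 = 0 \<and> a2 = 0 \<and> a3 = 0 \<and> c0 = 0 \<and> c1 = 0 \<and> c2 = 0 \<and> c3 = 0"
      unfolding n_def by (smt (verit) zero_le_square mult_eq_0_iff)
    thus False using nz a c by (simp add: quat_eq_iff)
  qed
  define B where "B = M2 a (Quat (-c0/n) (c1/n) (c2/n) (-c3/n)) c (Quat (a0/n) (-a1/n) (-a2/n) (a3/n))"
  have BS: "in_SL2V B" unfolding B_def a c by (rule SL2V_constr[OF n_def n0 h])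
  hence BS': "B \<in> SL2V" by (simp add: SL2V_def)
  have BP: "mmul (mmul B P0) (minv B) = M2 (1 - a * qstar c) (a * qstar a) (- (c * qstar c)) (1 + c * qstar a)"
    using conj_P0[OF BS[unfolded B_def]] unfolding B_def .
  show ?thesis
    using SL2V_inv[OF BS'] BS' BP by metis
qed

lemma inv_cancel1: "a \<noteq> 0 \<Longrightarrow> inverse a * (a * x) = (x::quat)"
  by (simp add: mult.assoc[symmetric])
lemma inv_cancel2: "a \<noteq> 0 \<Longrightarrow> a * (inverse a * x) = (x::quat)"
  by (simp add: mult.assoc[symmetric])

lemma one_three:
  assumes AS: "A \<in> SL2V" and A1: "A \<noteq> mone" and NN: "mmul (msub A mone) (msub A mone) = mzero"
  shows "\<exists>a c. (a, c) \<in> SH \<and>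
                  A = M2 (1 - a * qstar c) (a * qstar a) (- (c * qstar c)) (1 + c * qstar a)"
proof -
  obtain p q r s where A: "A = M2 p q r s" by (cases A)
  define N where "N = msub A mone"
  have "mmul (minv A) (mmul N N) = mzero" using NN N_def by simp
  moreover have "mmul (minv A) N = msub mone (minv A)"
    unfolding N_def mmul_msub_right using SL2V_inv[OF AS] by simp
  ultimately have "msub N (msub mone (minv A)) = mzero"
    by (simp add: mmul_assoc[symmetric] mmul_msub_left)
  hence e: "qstar q = q" "qstar r = r" "qstar p = 2 - s"
    unfolding N_def A by (simp_all add: mone_def mzero_def algebra_simps)
  define \<alpha> where "\<alpha> = p - 1"
  have s: "s = 1 - qstar \<alpha>" unfolding \<alpha>_def using e by (simp add: qstar_diff)
  have p: "p = 1 + \<alpha>" unfolding \<alpha>_def by simp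
  have NN': "\<alpha> * \<alpha> + q * r = 0" "\<alpha> * q = q * qstar \<alpha>"
    using NN unfolding A by (simp_all add: mone_def mzero_def s p algebra_simps eq_neg_iff_add_eq_0)
  show ?thesis
  proof (cases "q = 0")
    case False
    have qV: "q \<in> V" using e V_iff by simp
    obtain a where a: "a * qstar a = q" using qsqrt_exists[OF qV] by blast
    have a0: "a \<noteq> 0" using a False by auto
    have as0: "qstar a \<noteq> 0" using a0 by simp
    define c where "c = - (qstar \<alpha> * inverse (qstar a))"
    have cs: "qstar c = - (inverse a * \<alpha>)"
      unfolding c_def by (simp add: qstar_minus qstar_mult qstar_inverse)
    have G1: "1 - a * qstar c = p" using a0 unfolding cs p by (simp add: inv_cancel2 mult.assoc)
    have G4: "1 + c * qstar a = s" using as0 unfolding c_def s by (simp add: mult.assoc)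
    have iq: "inverse q * \<alpha> = qstar \<alpha> * inverse q"
    proof -
      have "inverse q * (\<alpha> * q) * inverse q = inverse q * (q * qstar \<alpha>) * inverse q"
        using NN' by simp
      thus ?thesis using False by (simp add: mult.assoc inv_cancel1 inv_cancel2)
    qed
    have G3: "- (c * qstar c) = r"
    proof -
      have "c * qstar c = qstar \<alpha> * (inverse (qstar a) * inverse a) * \<alpha>"
        unfolding cs unfolding c_def by (simp add: mult.assoc)
      also have "inverse (qstar a) * inverse a = inverse q"
        using a0 as0 nonzero_inverse_mult_distrib[of a "qstar a"] a by simp
      also have "qstar \<alpha> * inverse q * \<alpha> = inverse q * (\<alpha> * \<alpha>)"
        using iq by (simp add: mult.assoc[symmetric])
      also have "\<alpha> * \<alpha> = - (q * r)" using NN' by (simp add: eq_neg_iff_add_eq_0)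
      finally show ?thesis using False by (simp add: inv_cancel1)
    qed
    have G5: "qstar c * a \<in> V"
    proof -
      have "inverse a * (a * qstar a * qstar \<alpha>) * inverse (qstar a)
          = inverse a * (\<alpha> * (a * qstar a)) * inverse (qstar a)"
        using NN' a by simp
      hence "qstar a * qstar \<alpha> * inverse (qstar a) = inverse a * \<alpha> * a"
        using a0 as0 by (simp add: mult.assoc inv_cancel1 inv_cancel2)
      thus ?thesis unfolding V_iff cs
        by (simp add: qstar_minus qstar_mult qstar_inverse mult.assoc)
    qed
    have "(a, c) \<in> SH" using G5 a0 SH_iff by simp
    thus ?thesis using G1 G3 G4 a A by metis
  next
    case True
    have al: "\<alpha> = 0" using NN' True by simp
    have r0: "r \<noteq> 0" using A1 A True al p s by (auto simp: mone_def)
    have rV: "- r \<in> V" using e V_iff by (simp add: qstar_minus)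
    obtain c where c: "c * qstar c = - r" using qsqrt_exists[OF rV] by blast
    have c0: "c \<noteq> 0" using c r0 by auto
    have "(0, c) \<in> SH" using c0 SH_iff by (simp add: V_def)
    moreover have "A = M2 (1 - 0 * qstar c) (0 * qstar 0) (- (c * qstar c)) (1 + c * qstar 0)"
      using A True al p s c by simp
    ultimately show ?thesis by blast
  qed
qed
theorem lemma3p22:
  assumes "A \<in> SL2V"
  shows "((A \<noteq> mone \<and> mmul (msub A mone) (msub A mone) = mzero)
           \<longleftrightarrow> (\<exists>B C. B \<in> SL2V \<and> C \<in> SL2V \<and> mmul B C = mone \<and> mmul C B = mone \<and>
                      A = mmul (mmul B P0) C))
       \<and> ((\<exists>B C. B \<in> SL2V \<and> C \<in> SL2V \<and> mmul B C = mone \<and> mmul C B = mone \<and>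
                      A = mmul (mmul B P0) C)
           \<longleftrightarrow> (\<exists>a c. (a, c) \<in> SH \<and>
                  A = M2 (1 - a * qstar c) (a * qstar a) (- (c * qstar c)) (1 + c * qstar a)))"
proof -
  have 21: "A \<noteq> mone \<and> mmul (msub A mone) (msub A mone) = mzero"
    if "\<exists>B C. B \<in> SL2V \<and> C \<in> SL2V \<and> mmul B C = mone \<and> mmul C B = mone \<and>
                      A = mmul (mmul B P0) C"
    using that two_one by blast
  have 13: "\<exists>a c. (a, c) \<in> SH \<and>
                  A = M2 (1 - a * qstar c) (a * qstar a) (- (c * qstar c)) (1 + c * qstar a)"
    if "A \<noteq> mone \<and> mmul (msub A mone) (msub A mone) = mzero"
    using that one_three[OF assms] by blast
  have 32: "\<exists>B C. B \<in> SL2V \<and> C \<in> SL2V \<and> mmul B C = mone \<and> mmul C B = mone \<and>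
                      A = mmul (mmul B P0) C"
    if "\<exists>a c. (a, c) \<in> SH \<and>
                  A = M2 (1 - a * qstar c) (a * qstar a) (- (c * qstar c)) (1 + c * qstar a)"
    using that three_two by metis
  show ?thesis using 21 13 32 by blast
qed

end
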